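(* There exists a Lipschitz function $f:[-1,1]\to\mathbb{R}$ (i.e. $|f(x)-f(y)|\le \kappa|x-y|$ for some constant $\kappa$ and all $x,y\in[-1,1]$) such that \[ \limsup_{n\to\infty}\frac{n}{\log n}\,\|B_n(f)-f\|_\infty>0, \] where $\|g\|_\infty=\sup_{x\in[-1,1]}|g(x)|$.
   Context: For $n\ge 1$ the equally spaced nodes are $x_{k,n}:=2k/n-1$, $k=0,\dots,n$. Berrut's barycentric interpolant of $f:[-1,1]\to\mathbb{R}$ is \[ B_n(f,x):=\frac{N_n(f,x)}{D_n(x)}\ \text{ for } x\notin\{x_{0,n},\dots,x_{n,n}\},\qquad B_n(f,x_{k,n}):=f(x_{k,n}), \] where $N_n(f,x)=\sum_{k=0}^n(-1)^k\frac{f(x_{k,n})}{x-x_{k,n}}$ and $D_n(x)=\sum_{k=0}^n(-1)^k\frac{1}{x-x_{k,n}}$. $B_n(f)$ denotes the function $x\mapsto B_n(f,x)$ on $[-1,1]$. *)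

theory Defs
  imports "HOL-Analysis.Analysis"
begin

definition node :: "nat \<Rightarrow> nat \<Rightarrow> real" where
  "node n k = 2 * real k / real n - 1"

definition berrut_num :: "nat \<Rightarrow> (real \<Rightarrow> real) \<Rightarrow> real \<Rightarrow> real" where
  "berrut_num n f x = (\<Sum>k=0..n. (-1)^k * f (node n k) / (x - node n k))"

definition berrut_den :: "nat \<Rightarrow> real \<Rightarrow> real" where
  "berrut_den n x = (\<Sum>k=0..n. (-1)^k / (x - node n k))"

definition berrut :: "nat \<Rightarrow> (real \<Rightarrow> real) \<Rightarrow> real \<Rightarrow> real" where
  "berrut n f x =
     (if \<exists>k\<le>n. x = node n k then f x
      else berrut_num n f x / berrut_den n x)"

definition sup_norm :: "(real \<Rightarrow> real) \<Rightarrow> real" where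
  "sup_norm g = (SUP x\<in>{-1..1}. \<bar>g x\<bar>)"

end

theory Submission
  imports Defs "HOL-Analysis.Harmonic_Numbers"
begin


lemma alt_bound:
  fixes a :: "nat \<Rightarrow> real"
  assumes "\<And>i. 0 \<le> a i" "\<And>i. a (Suc i) \<le> a i"
  shows "0 \<le> (\<Sum>i<m. (-1)^i * a i) \<and> (\<Sum>i<m. (-1)^i * a i) \<le> a 0"
  using assms
proof (induction m arbitrary: a)
  case 0
  then show ?case by simp
next
  case (Suc m)
  have IH: "0 \<le> (\<Sum>i<m. (-1)^i * a (Suc i)) \<and> (\<Sum>i<m. (-1)^i * a (Suc i)) \<le> a (Suc 0)"
    using Suc.IH[of "\<lambda>i. a (Suc i)"] Suc.prems by auto
  have "(\<Sum>i<Suc m. (-1)^i * a i) = a 0 - (\<Sum>i<m. (-1)^i * a (Suc i))"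
    by (subst sum.lessThan_Suc_shift) (simp add: sum_negf)
  then show ?case using IH Suc.prems(2)[of 0] by linarith
qed

lemma alt_shift:
  fixes a :: "nat \<Rightarrow> real"
  shows "(\<Sum>i<Suc m. (-1)^i * a i) = a 0 - (\<Sum>i<m. (-1)^i * a (Suc i))"
  by (subst sum.lessThan_Suc_shift) (simp add: sum_negf)

lemma alt_var:
  fixes a :: "nat \<Rightarrow> real"
  shows "\<bar>\<Sum>k<Suc n. (-1)^k * a k\<bar> \<le> \<bar>a n\<bar> + (\<Sum>k<n. \<bar>a (Suc k) - a k\<bar>)"
proof (induction n arbitrary: a rule: less_induct)
  case (less n)
  show ?case
  proof (cases n)
    case 0 then show ?thesis by simp
  next
    case (Suc p)
    show ?thesis
    proof (cases p)
      case 0 then show ?thesis using Suc by simp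
    next
      case (Suc q)
      have IH: "\<bar>\<Sum>k<Suc q. (-1)^k * a (Suc (Suc k))\<bar> \<le> \<bar>a (Suc (Suc q))\<bar> + (\<Sum>k<q. \<bar>a (Suc (Suc (Suc k))) - a (Suc (Suc k))\<bar>)"
        using less.IH[of q "\<lambda>k. a (Suc (Suc k))"] \<open>n = Suc p\<close> Suc by auto
      have e1: "(\<Sum>k<Suc n. (-1)^k * a k) = (a 0 - a 1) + (\<Sum>k<Suc q. (-1)^k * a (Suc (Suc k)))"
        using \<open>n = Suc p\<close> Suc by (simp only: sum.lessThan_Suc_shift) simp
      have e2: "(\<Sum>k<n. \<bar>a (Suc k) - a k\<bar>) = \<bar>a 1 - a 0\<bar> + (\<Sum>k<q. \<bar>a (Suc (Suc (Suc k))) - a (Suc (Suc k))\<bar>) + \<bar>a (Suc (Suc 0)) - a 1\<bar>"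
        using \<open>n = Suc p\<close> Suc by (simp only: sum.lessThan_Suc_shift) simp
      have "a n = a (Suc (Suc q))" using \<open>n = Suc p\<close> Suc by simp
      then show ?thesis unfolding e1 e2 using IH abs_triangle_ineq[of "a 0 - a 1" "\<Sum>k<Suc q. (-1)^k * a (Suc (Suc k))"]
         by (smt (verit))
    qed
  qed
qed


lemma node_diff: "n > 0 \<Longrightarrow> node n k - node n i = 2 * (real k - real i) / real n"
  by (simp add: node_def field_simps)

lemma den_split:
  assumes "j < n"
  shows "berrut_den n x = (-1)^j * ((\<Sum>i<Suc j. (-1)^i * (1 / (x - node n (j - i))))
                                   + (\<Sum>i<n - j. (-1)^i * (1 / (node n (Suc j + i) - x))))"
proof -
  have s: "{0..n} = {0..j} \<union> {Suc j..n}" using assms by auto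
  have "berrut_den n x = (\<Sum>k\<in>{0..j}. (-1)^k / (x - node n k)) + (\<Sum>k\<in>{Suc j..n}. (-1)^k / (x - node n k))"
    unfolding berrut_den_def s by (subst sum.union_disjoint) auto
  also have "(\<Sum>k\<in>{0..j}. (-1)^k / (x - node n k)) = (\<Sum>i<Suc j. (-1)^(j-i) / (x - node n (j - i)))"
    by (rule sum.reindex_bij_witness[where i="\<lambda>i. j - i" and j="\<lambda>k. j - k"]) auto
  also have "\<dots> = (\<Sum>i<Suc j. (-1)^j * ((-1)^i * (1 / (x - node n (j - i)))))"
  proof (rule sum.cong[OF refl])
    fix i assume "i \<in> {..<Suc j}"
    then have ij: "i \<le> j" by simp
    have e1: "(-1::real)^(j-i) * (-1)^i = (-1)^j" using ij by (simp flip: power_add)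
    have e2: "(-1::real)^i * (-1)^i = 1" by (simp flip: power_add add: mult_2[symmetric])
    have "(-1::real)^(j-i) = (-1)^j * (-1)^i" using e1 e2
      by (metis mult.assoc mult.right_neutral)
    then show "(-1)^(j-i) / (x - node n (j - i)) = (-1)^j * ((-1)^i * (1 / (x - node n (j - i))))"
      by simp
  qed
  also have "(\<Sum>k\<in>{Suc j..n}. (-1)^k / (x - node n k)) = (\<Sum>i<n-j. (-1)^(Suc j + i) / (x - node n (Suc j + i)))"
    by (rule sum.reindex_bij_witness[where i="\<lambda>i. Suc j + i" and j="\<lambda>k. k - Suc j"]) auto
  also have "\<dots> = (\<Sum>i<n-j. (-1)^j * ((-1)^i * (1 / (node n (Suc j + i) - x))))"
  proof (rule sum.cong[OF refl])
    fix i
    have "1 / (node n (Suc j + i) - x) = - (1 / (x - node n (Suc j + i)))"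
      by (metis minus_diff_eq divide_minus_right)
    then show "(-1)^(Suc j + i) / (x - node n (Suc j + i)) = (-1)^j * ((-1)^i * (1 / (node n (Suc j + i) - x)))"
      by (simp add: power_add)
  qed
  finally show ?thesis by (simp add: sum_distrib_left distrib_left)
qed

lemma left_bounds:
  assumes n: "n > 0" and x: "node n j < x" "x < node n (Suc j)"
  defines "A \<equiv> (\<Sum>i<Suc j. (-1)^i * (1 / (x - node n (j - i))))"
  shows "1 / (2 * (x - node n j)) \<le> A \<and> A \<le> 1 / (x - node n j)"
proof -
  define a where "a i = 1 / (x - node n (j - i))" for i
  have nd: "node n (j - Suc i) \<le> node n (j - i)" for i
    using n by (simp add: node_def divide_right_mono)
  have nx: "node n (j - i) \<le> node n j" for i
    using n by (simp add: node_def divide_right_mono)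
  have a0: "0 \<le> a i" for i using nx[of i] x by (simp add: a_def)
  have p1: "0 < x - node n (j - i)" for i using nx[of i] x by simp
  have a1: "a (Suc i) \<le> a i" for i
    unfolding a_def using nd[of i] p1[of i] p1[of "Suc i"] by (intro divide_left_mono) (auto intro: mult_pos_pos)
  have sh: "A = a 0 - (\<Sum>i<j. (-1)^i * a (Suc i))"
    unfolding A_def a_def by (rule alt_shift)
  have b: "0 \<le> (\<Sum>i<j. (-1)^i * a (Suc i)) \<and> (\<Sum>i<j. (-1)^i * a (Suc i)) \<le> a 1"
    using alt_bound[of "\<lambda>i. a (Suc i)" j] a0 a1 by auto
  have "A \<ge> a 0 / 2"
  proof (cases j)
    case 0 then show ?thesis using sh a0[of 0] by simp
  next
    case (Suc p)
    have d: "node n j - node n (j - 1) = 2 / real n" using Suc n by (simp add: node_def field_simps)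
    have d2: "node n (Suc j) - node n j = 2 / real n" using n by (simp add: node_def field_simps)
    have "a 1 = 1 / (x - node n j + 2 / real n)" unfolding a_def using d by (smt (verit, best) One_nat_def)
    also have "\<dots> \<le> 1 / (2 * (x - node n j))"
      using x d2 by (intro divide_left_mono) auto
    finally have h: "a 1 \<le> 1 / (2 * (x - node n j))" .
    have "a 0 / 2 = 1 / (2 * (x - node n j))" by (simp add: a_def)
    then show ?thesis using sh b h by linarith
  qed
  moreover have "A \<le> a 0" using sh b by simp
  moreover have "a 0 / 2 = 1 / (2 * (x - node n j))" "a 0 = 1 / (x - node n j)" by (simp_all add: a_def)
  ultimately show ?thesis by (simp only:)
qed

lemma right_bounds:
  assumes n: "n > 0" and j: "j < n" and x: "node n j < x" "x < node n (Suc j)"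
  defines "B \<equiv> (\<Sum>i<n - j. (-1)^i * (1 / (node n (Suc j + i) - x)))"
  shows "1 / (2 * (node n (Suc j) - x)) \<le> B \<and> B \<le> 1 / (node n (Suc j) - x)"
proof -
  define b where "b i = 1 / (node n (Suc j + i) - x)" for i
  have nd: "node n (Suc j + i) \<le> node n (Suc j + Suc i)" for i
    using n by (simp add: node_def divide_right_mono)
  have nx: "node n (Suc j) \<le> node n (Suc j + i)" for i
    using n by (simp add: node_def divide_right_mono)
  have b0: "0 \<le> b i" for i using nx[of i] x by (simp add: b_def)
  have p1: "0 < node n (Suc j + i) - x" for i using nx[of i] x by simp
  have b1: "b (Suc i) \<le> b i" for i
    unfolding b_def using nd[of i] p1[of i] p1[of "Suc i"] by (intro divide_left_mono) (auto intro: mult_pos_pos)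
  obtain p where p: "n - j = Suc p" using j by (metis Suc_diff_Suc)
  have sh: "B = b 0 - (\<Sum>i<p. (-1)^i * b (Suc i))"
    unfolding B_def b_def p by (rule alt_shift)
  have bb: "0 \<le> (\<Sum>i<p. (-1)^i * b (Suc i)) \<and> (\<Sum>i<p. (-1)^i * b (Suc i)) \<le> b 1"
    using alt_bound[of "\<lambda>i. b (Suc i)" p] b0 b1 by auto
  have d: "node n (Suc j + 1) - node n (Suc j) = 2 / real n" using n by (simp add: node_def field_simps)
  have d2: "node n (Suc j) - node n j = 2 / real n" using n by (simp add: node_def field_simps)
  have "b 1 = 1 / (node n (Suc j) - x + 2 / real n)" unfolding b_def using d by (smt (verit, best))
  also have "\<dots> \<le> 1 / (2 * (node n (Suc j) - x))"
    using x d2 by (intro divide_left_mono) auto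
  finally have h: "b 1 \<le> 1 / (2 * (node n (Suc j) - x))" .
  have "b 0 / 2 = 1 / (2 * (node n (Suc j) - x))" by (simp add: b_def)
  then have "B \<ge> b 0 / 2" using sh bb h by linarith
  moreover have "B \<le> b 0" using sh bb by simp
  moreover have "b 0 / 2 = 1 / (2 * (node n (Suc j) - x))" "b 0 = 1 / (node n (Suc j) - x)" by (simp_all add: b_def)
  ultimately show ?thesis by (simp only:)
qed


lemma find_j:
  assumes n: "n > 0" and x: "-1 \<le> x" "x < 1" and nn: "\<forall>k\<le>n. x \<noteq> node n k"
  shows "\<exists>j<n. node n j < x \<and> x < node n (Suc j)"
proof -
  define y where "y = (x + 1) * real n / 2"
  have y0: "0 \<le> y" using x n by (simp add: y_def)
  have yn: "y < real n" using x n by (simp add: y_def field_simps)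
  define j where "j = nat \<lfloor>y\<rfloor>"
  have jy: "real j \<le> y" "y < real j + 1" using y0 by (simp_all add: j_def)
  have jn: "j < n" using jy yn by linarith
  have nodey: "node n k = 2 * real k / real n - 1" for k by (simp add: node_def)
  have "x \<noteq> node n j" using nn jn by auto
  then have "y \<noteq> real j" using n by (auto simp: y_def nodey field_simps)
  then have "real j < y" using jy by simp
  then have "node n j < x" using n by (simp add: y_def nodey field_simps)
  moreover have "x < node n (Suc j)" using jy n by (simp add: y_def nodey field_simps)
  ultimately show ?thesis using jn by blast
qed

lemma den_abs:
  assumes n: "n > 0" and j: "j < n" and x: "node n j < x" "x < node n (Suc j)"
  shows "\<bar>berrut_den n x\<bar> \<ge> 1 / (2 * (x - node n j))"
    and "\<bar>berrut_den n x\<bar> \<ge> 1 / (2 * (node n (Suc j) - x))"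
    and "\<bar>berrut_den n x\<bar> \<le> 1 / (x - node n j) + 1 / (node n (Suc j) - x)"
    and "berrut_den n x \<noteq> 0"
proof -
  define A where "A = (\<Sum>i<Suc j. (-1)^i * (1 / (x - node n (j - i))))"
  define B where "B = (\<Sum>i<n - j. (-1)^i * (1 / (node n (Suc j + i) - x)))"
  have D: "berrut_den n x = (-1)^j * (A + B)" unfolding A_def B_def by (rule den_split[OF j])
  have bA: "1 / (2 * (x - node n j)) \<le> A \<and> A \<le> 1 / (x - node n j)"
    unfolding A_def by (rule left_bounds[OF n x])
  have bB: "1 / (2 * (node n (Suc j) - x)) \<le> B \<and> B \<le> 1 / (node n (Suc j) - x)"
    unfolding B_def by (rule right_bounds[OF n j x])
  have p1: "0 < 1 / (2 * (x - node n j))" using x by simp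
  have p2: "0 < 1 / (2 * (node n (Suc j) - x))" using x by simp
  have "A + B > 0" using bA bB p1 p2 by linarith
  then have ab: "\<bar>berrut_den n x\<bar> = A + B" using D by (simp add: abs_mult)
  show "\<bar>berrut_den n x\<bar> \<ge> 1 / (2 * (x - node n j))" using ab bA bB p2 by linarith
  show "\<bar>berrut_den n x\<bar> \<ge> 1 / (2 * (node n (Suc j) - x))" using ab bA bB p1 by (smt (verit))
  show "\<bar>berrut_den n x\<bar> \<le> 1 / (x - node n j) + 1 / (node n (Suc j) - x)" using ab bA bB by linarith
  show "berrut_den n x \<noteq> 0" using ab \<open>A + B > 0\<close> by (metis abs_zero less_irrefl)
qed

lemma berrut_bound:
  assumes n: "n > 0" and M: "\<And>t. \<bar>f t\<bar> \<le> M" and x: "x \<in> {-1..1}"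
  shows "\<bar>berrut n f x\<bar> \<le> 2 * (real n + 1) * M"
proof (cases "\<exists>k\<le>n. x = node n k")
  case True
  then have "berrut n f x = f x" by (simp add: berrut_def)
  moreover have "M \<ge> 0" using M[of 0] by simp
  ultimately show ?thesis using M[of x] n
    by (smt (verit, ccfv_SIG) mult_nonneg_nonneg of_nat_0_le_iff mult_le_cancel_right1 le_add2)
next
  case False
  have x1: "x < 1"
  proof -
    have "node n n = 1" using n by (simp add: node_def)
    then show ?thesis using False x by force
  qed
  obtain j where j: "j < n" "node n j < x" "x < node n (Suc j)"
    using find_j[OF n _ x1] x False by auto
  define \<delta> where "\<delta> = min (x - node n j) (node n (Suc j) - x)"
  have dpos: "\<delta> > 0" using j by (simp add: \<delta>_def)
  have far: "\<bar>x - node n k\<bar> \<ge> \<delta>" for k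
  proof (cases "k \<le> j")
    case True
    then have "node n k \<le> node n j" using n by (simp add: node_def divide_right_mono)
    then show ?thesis using j by (simp add: \<delta>_def)
  next
    case False
    then have "node n (Suc j) \<le> node n k" using n by (simp add: node_def divide_right_mono)
    then show ?thesis using j by (simp add: \<delta>_def)
  qed
  have Dge: "\<bar>berrut_den n x\<bar> \<ge> 1 / (2 * \<delta>)"
    using den_abs(1,2)[OF n j] by (simp add: \<delta>_def min_def)
  have Dpos: "\<bar>berrut_den n x\<bar> > 0" using Dge dpos by (smt (verit) divide_pos_pos)
  have M0: "M \<ge> 0" using M[of 0] by simp
  have "\<bar>berrut_num n f x\<bar> \<le> (\<Sum>k=0..n. \<bar>(-1)^k * f (node n k) / (x - node n k)\<bar>)"
    unfolding berrut_num_def by (rule sum_abs)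
  also have "\<dots> \<le> (\<Sum>k=0..n. M / \<delta>)"
  proof (rule sum_mono)
    fix k assume "k \<in> {0..n}"
    have "\<bar>(-1)^k * f (node n k) / (x - node n k)\<bar> = \<bar>f (node n k)\<bar> / \<bar>x - node n k\<bar>"
      by (simp add: abs_mult)
    also have "\<dots> \<le> M / \<delta>"
      using M[of "node n k"] far[of k] dpos M0 by (intro frac_le) auto
    finally show "\<bar>(-1)^k * f (node n k) / (x - node n k)\<bar> \<le> M / \<delta>" .
  qed
  also have "\<dots> = (real n + 1) * M / \<delta>" by simp
  finally have Nb: "\<bar>berrut_num n f x\<bar> \<le> (real n + 1) * M / \<delta>" .
  have "\<bar>berrut n f x\<bar> = \<bar>berrut_num n f x\<bar> / \<bar>berrut_den n x\<bar>"
    using False unfolding berrut_def by (auto simp: abs_divide)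
  also have "\<dots> \<le> ((real n + 1) * M / \<delta>) / (1 / (2 * \<delta>))"
    using Nb Dge dpos M0 by (intro frac_le) auto
  also have "\<dots> = 2 * (real n + 1) * M" using dpos by (simp add: field_simps)
  finally show ?thesis .
qed

lemma mid_den:
  assumes n: "n > 0" and r: "r < n" and x: "x = -1 + (2 * real r + 1) / real n"
  shows "berrut_den n x \<noteq> 0" "\<bar>berrut_den n x\<bar> \<le> 2 * real n"
    "\<forall>k\<le>n. x \<noteq> node n k"
proof -
  have a: "x - node n r = 1 / real n" using n by (simp add: x node_def field_simps)
  have b: "node n (Suc r) - x = 1 / real n" using n by (simp add: x node_def field_simps)
  have j: "node n r < x" "x < node n (Suc r)" using a b n by (smt (verit) divide_pos_pos of_nat_0_less_iff)+
  show "berrut_den n x \<noteq> 0" by (rule den_abs(4)[OF n r j])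
  show "\<bar>berrut_den n x\<bar> \<le> 2 * real n" using den_abs(3)[OF n r j] a b by simp
  show "\<forall>k\<le>n. x \<noteq> node n k"
  proof (intro allI impI)
    fix k assume "k \<le> n"
    show "x \<noteq> node n k"
    proof
      assume "x = node n k"
      then have "2 * real r + 1 = 2 * real k" using n by (simp add: x node_def field_simps)
      then have "2 * r + 1 = 2 * k" by linarith
      then show False by presburger
    qed
  qed
qed


lemma gdiff:
  fixes R :: "real \<Rightarrow> real"
  assumes Lip: "\<And>s t. \<bar>R s - R t\<bar> \<le> \<bar>s - t\<bar>" and bnd: "\<And>t. \<bar>R t\<bar> \<le> 1"
    and van: "\<And>t. \<bar>t - x\<bar> < d \<Longrightarrow> R t = 0" and d: "0 < d"
  shows "\<bar>R s / (x - s) - R t / (x - t)\<bar> \<le> \<bar>s - t\<bar> * (1/d + 1/d^2)"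
proof -
  have one: "\<bar>R u / (x - u)\<bar> \<le> \<bar>u - v\<bar> / d" if "\<bar>v - x\<bar> < d" for u v
  proof (cases "\<bar>u - x\<bar> < d")
    case True then show ?thesis using van by simp
  next
    case False
    have "R v = 0" using van that by simp
    then have "\<bar>R u\<bar> \<le> \<bar>u - v\<bar>" using Lip[of u v] by simp
    moreover have "\<bar>x - u\<bar> \<ge> d" using False by simp
    ultimately have "\<bar>R u\<bar> / \<bar>x - u\<bar> \<le> \<bar>u - v\<bar> / d" using d by (intro frac_le) auto
    then show ?thesis by (simp add: abs_divide)
  qed
  have nn: "0 \<le> \<bar>s - t\<bar> / d^2" using d by simp
  show ?thesis
  proof (cases "\<bar>s - x\<bar> < d")
    case True
    then have "R s = 0" using van by simp
    then have "\<bar>R s / (x - s) - R t / (x - t)\<bar> = \<bar>R t / (x - t)\<bar>" by simp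
    also have "\<dots> \<le> \<bar>t - s\<bar> / d" by (rule one[OF True])
    finally have h: "\<bar>R s / (x - s) - R t / (x - t)\<bar> \<le> \<bar>t - s\<bar> / d" .
    have "\<bar>s - t\<bar> * (1/d + 1/d^2) = \<bar>t - s\<bar> / d + \<bar>s - t\<bar> / d^2" by (simp add: distrib_left abs_minus_commute)
    then show ?thesis using h nn by linarith
  next
    case Fs: False
    show ?thesis
    proof (cases "\<bar>t - x\<bar> < d")
      case True
      then have "R t = 0" using van by simp
      then have "\<bar>R s / (x - s) - R t / (x - t)\<bar> = \<bar>R s / (x - s)\<bar>" by simp
      also have "\<dots> \<le> \<bar>s - t\<bar> / d" by (rule one[OF True])
      finally have h: "\<bar>R s / (x - s) - R t / (x - t)\<bar> \<le> \<bar>s - t\<bar> / d" .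
      have "\<bar>s - t\<bar> * (1/d + 1/d^2) = \<bar>s - t\<bar> / d + \<bar>s - t\<bar> / d^2" by (simp add: distrib_left)
      then show ?thesis using h nn by linarith
    next
      case Ft: False
      have ds: "\<bar>x - s\<bar> \<ge> d" and dt: "\<bar>x - t\<bar> \<ge> d" using Fs Ft by auto
      have ns: "x - s \<noteq> 0" and nt: "x - t \<noteq> 0" using ds dt d by auto
      have e: "R s / (x - s) - R t / (x - t) = (R s - R t) / (x - s) + R t * ((s - t) / ((x - s) * (x - t)))"
      proof -
        have "R t * ((s - t) / ((x - s) * (x - t))) = R t / (x - s) - R t / (x - t)"
          using ns nt by (simp add: divide_simps) (simp add: algebra_simps)
        then show ?thesis by (simp add: diff_divide_distrib)
      qed
      have t1: "\<bar>(R s - R t) / (x - s)\<bar> \<le> \<bar>s - t\<bar> / d"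
        unfolding abs_divide using Lip[of s t] ds d by (intro frac_le) auto
      have "\<bar>(x - s) * (x - t)\<bar> \<ge> d * d" using ds dt d unfolding abs_mult
        by (intro mult_mono) auto
      then have t2a: "\<bar>(s - t) / ((x - s) * (x - t))\<bar> \<le> \<bar>s - t\<bar> / d^2"
        unfolding abs_divide power2_eq_square using d by (intro frac_le) auto
      have t2: "\<bar>R t * ((s - t) / ((x - s) * (x - t)))\<bar> \<le> \<bar>s - t\<bar> / d^2"
      proof -
        have "\<bar>R t\<bar> * \<bar>(s - t) / ((x - s) * (x - t))\<bar> \<le> 1 * \<bar>(s - t) / ((x - s) * (x - t))\<bar>"
          by (rule mult_right_mono[OF bnd abs_ge_zero])
        then show ?thesis unfolding abs_mult using t2a by linarith
      qed
      have "\<bar>s - t\<bar> * (1/d + 1/d^2) = \<bar>s - t\<bar> / d + \<bar>s - t\<bar> / d^2" by (simp add: distrib_left)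
      then show ?thesis unfolding e using t1 t2 abs_triangle_ineq[of "(R s - R t) / (x - s)" "R t * ((s - t) / ((x - s) * (x - t)))"]
        by linarith
    qed
  qed
qed

lemma junk_bound:
  fixes R :: "real \<Rightarrow> real"
  assumes n: "n > 0" and Lip: "\<And>s t. \<bar>R s - R t\<bar> \<le> \<bar>s - t\<bar>" and bnd: "\<And>t. \<bar>R t\<bar> \<le> 1"
    and van: "\<And>t. \<bar>t - x\<bar> < d \<Longrightarrow> R t = 0" and d: "0 < d" "d \<le> 1"
  shows "\<bar>\<Sum>k=0..n. (-1)^k * R (node n k) / (x - node n k)\<bar> \<le> 5 / d^2"
proof -
  define a where "a k = R (node n k) / (x - node n k)" for k
  have "(\<Sum>k=0..n. (-1)^k * R (node n k) / (x - node n k)) = (\<Sum>k<Suc n. (-1)^k * a k)"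
    unfolding a_def atLeast0AtMost lessThan_Suc_atMost by simp
  then have "\<bar>\<Sum>k=0..n. (-1)^k * R (node n k) / (x - node n k)\<bar> \<le> \<bar>a n\<bar> + (\<Sum>k<n. \<bar>a (Suc k) - a k\<bar>)"
    using alt_var[of a n] by simp
  also have "\<dots> \<le> 1 / d + (\<Sum>k<n. (2 / real n) * (1/d + 1/d^2))"
  proof (rule add_mono)
    show "\<bar>a n\<bar> \<le> 1 / d"
    proof (cases "\<bar>node n n - x\<bar> < d")
      case True then show ?thesis using van d by (simp add: a_def)
    next
      case False
      then have "\<bar>x - node n n\<bar> \<ge> d" by simp
      then show ?thesis unfolding a_def abs_divide using bnd[of "node n n"] d by (intro frac_le) auto
    qed
    show "(\<Sum>k<n. \<bar>a (Suc k) - a k\<bar>) \<le> (\<Sum>k<n. (2 / real n) * (1/d + 1/d^2))"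
    proof (rule sum_mono)
      fix k
      have "\<bar>node n (Suc k) - node n k\<bar> = 2 / real n" using n by (simp add: node_def field_simps)
      then show "\<bar>a (Suc k) - a k\<bar> \<le> (2 / real n) * (1/d + 1/d^2)"
        unfolding a_def using gdiff[OF Lip bnd van d(1), where s="node n (Suc k)" and t="node n k"] by simp
    qed
  qed
  also have "\<dots> = 1/d + 2 * (1/d + 1/d^2)" using n by simp
  also have "\<dots> \<le> 5 / d^2"
  proof -
    have "1/d \<le> 1/d^2" using d by (simp add: power2_eq_square divide_le_eq field_simps)
    then show ?thesis by simp
  qed
  finally show ?thesis .
qed


lemma cos_lip: fixes a b :: real shows "\<bar>cos a - cos b\<bar> \<le> \<bar>a - b\<bar>"
proof -
  have "\<bar>cos a - cos b\<bar> = 2 * \<bar>sin ((a + b) / 2)\<bar> * \<bar>sin ((b - a) / 2)\<bar>"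
    by (simp add: cos_diff_cos abs_mult)
  also have "\<dots> \<le> 2 * 1 * \<bar>(b - a) / 2\<bar>"
    by (intro mult_mono abs_sin_x_le_abs_x) auto
  finally show ?thesis by simp
qed

definition EE :: "nat \<Rightarrow> nat" where "EE m = 200 * 4^(m+2)"
definition KK :: "nat \<Rightarrow> nat" where "KK m = 2^(EE m)"
definition qq :: "nat \<Rightarrow> nat" where "qq m = 8 * KK m + 1"
definition nn :: "nat \<Rightarrow> nat" where "nn m = 2^(m+1) * qq m"
definition xx :: "nat \<Rightarrow> real" where "xx m = -1 + real (qq m) / real (nn m)"
definition lo :: "nat \<Rightarrow> real" where "lo m = -1 + (real (qq m) - 2 * real (KK m)) / real (nn m)"
definition hi :: "nat \<Rightarrow> real" where "hi m = -1 + (real (qq m) - 2) / real (nn m)"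
definition uu :: "nat \<Rightarrow> real \<Rightarrow> real" where
  "uu m t = 2 / (pi * real (nn m)) * cos (pi * real (nn m) * (t + 1) / 2)"

lemma KK_pos: "KK m \<ge> 1" by (simp add: KK_def)
lemma nn_pos: "nn m > 0" by (simp add: nn_def qq_def)

lemma nn_real: "real (nn m) = 2^(m+1) * (8 * real (KK m) + 1)"
  by (simp add: nn_def qq_def algebra_simps)

lemma qq_real: "real (qq m) = 8 * real (KK m) + 1"
  by (simp add: qq_def)

lemma xx_eq: "xx m = -1 + 1 / 2^(m+1)"
proof -
  have "(8 * real (KK m) + 1) \<noteq> 0" by (smt (verit) of_nat_0_le_iff)
  then show ?thesis by (simp add: xx_def nn_real qq_real)
qed

lemma aux1: "P > 0 \<Longrightarrow> K \<ge> 1 \<Longrightarrow> 2 * K / (P * (8 * K + 1)) \<le> 1 / (4 * (P::real))"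
proof -
  assume P: "P > 0" and K: "K \<ge> 1"
  have "2 * K * (4 * P) \<le> 1 * (P * (8 * K + 1))" using P K by (simp add: algebra_simps)
  moreover have "0 < P * (8 * K + 1)" "0 < 4 * P" using P K by simp_all
  ultimately show ?thesis using K by (simp add: frac_le_eq divide_le_eq le_divide_eq)
qed

lemma lo_ge: "lo m \<ge> -1 + 3 / 2^(m+3)"
proof -
  define P :: real where "P = 2^(m+1)"
  have P: "P > 0" by (simp add: P_def)
  have p3: "(2::real)^(m+3) = 4 * P" by (simp add: P_def power_add)
  define K where "K = real (KK m)"
  have k: "K \<ge> 1" using KK_pos[of m] by (simp add: K_def)
  have nz: "8 * K + 1 \<noteq> 0" using k by simp
  have nr: "real (nn m) = P * (8 * K + 1)" by (simp add: nn_real P_def K_def)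
  have "lo m = -1 + ((8 * K + 1) - 2 * K) / (P * (8 * K + 1))"
    unfolding lo_def nr by (simp add: qq_real K_def)
  also have "\<dots> = -1 + 1 / P - 2 * K / (P * (8 * K + 1))" proof -
    have "((8 * K + 1) - 2 * K) / (P * (8 * K + 1)) = (8 * K + 1) / (P * (8 * K + 1)) - 2 * K / (P * (8 * K + 1))"
      by (rule diff_divide_distrib)
    moreover have "(8 * K + 1) / (P * (8 * K + 1)) = 1 / P" using nz by simp
    ultimately show ?thesis by simp
  qed
  finally have e: "lo m = -1 + 1 / P - 2 * K / (P * (8 * K + 1))" .
  have "1 / P = 4 / (4 * P)" by simp
  moreover have "(4::real) / (4 * P) - 1 / (4 * P) = 3 / (4 * P)" by (simp add: diff_divide_distrib[symmetric])
  ultimately show ?thesis unfolding p3 e using aux1[OF P k] by linarith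
qed

lemma hi_le: "hi m \<le> -1 + 1 / 2^(m+1)"
proof -
  have "(real (qq m) - 2) / real (nn m) \<le> real (qq m) / real (nn m)"
    using nn_pos[of m] by (intro divide_right_mono) auto
  then show ?thesis unfolding hi_def using xx_eq[of m] by (simp add: xx_def)
qed

lemma hi_lt_xx: "hi m < xx m"
  unfolding hi_def xx_def using nn_pos[of m] by (simp add: field_simps)

lemma pow_mono_inv: "k \<le> k' \<Longrightarrow> (c::real) \<ge> 0 \<Longrightarrow> c / 2^k' \<le> c / 2^k"
  by (intro divide_left_mono) (auto intro: power_increasing)

lemma order_I: "m < m' \<Longrightarrow> hi m' < lo m"
proof -
  assume "m < m'"
  then have "m + 2 \<le> m' + 1" by simp
  then have "1 / 2^(m'+1) \<le> (1::real) / 2^(m+2)" by (rule pow_mono_inv) simp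
  moreover have "(1::real) / 2^(m+2) = 2 / 2^(m+3)" by (simp add: power_add)
  moreover have "(2::real) / 2^(m+3) < 3 / 2^(m+3)" by (simp add: divide_strict_right_mono)
  ultimately show ?thesis using hi_le[of m'] lo_ge[of m] by linarith
qed

lemma uniq_I:
  assumes "lo i \<le> t" "t \<le> hi i" "lo i' \<le> t" "t \<le> hi i'"
  shows "i = i'"
proof (rule ccontr)
  assume "i \<noteq> i'"
  then consider "i < i'" | "i' < i" by linarith
  then show False
  proof cases
    case 1 then show False using order_I[of i i'] assms by linarith
  next
    case 2 then show False using order_I[of i' i] assms by linarith
  qed
qed

lemma xx_eq2: "xx m = -1 + 2 / 2^(m+2)"
  by (simp add: xx_eq power_add)

lemma far_I:
  assumes "i \<noteq> m" "lo i \<le> t" "t \<le> hi i"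
  shows "\<bar>t - xx m\<bar> \<ge> 1 / 2^(m+2)"
proof (cases "i < m")
  case True
  then have "i + 3 \<le> m + 2" by simp
  then have a: "3 / 2^(m+2) \<le> (3::real) / 2^(i+3)" by (rule pow_mono_inv) simp
  have b: "(3::real) / 2^(m+2) = 2 / 2^(m+2) + 1 / 2^(m+2)" by (simp add: add_divide_distrib[symmetric])
  show ?thesis using a b xx_eq2[of m] lo_ge[of i] assms by linarith
next
  case False
  then have "m + 2 \<le> i + 1" using assms by simp
  then have a: "1 / 2^(i+1) \<le> (1::real) / 2^(m+2)" by (rule pow_mono_inv) simp
  have b: "(2::real) / 2^(m+2) = 1 / 2^(m+2) + 1 / 2^(m+2)" by (simp add: add_divide_distrib[symmetric])
  show ?thesis using a b xx_eq2[of m] hi_le[of i] assms by linarith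
qed



lemma uu_lip: "\<bar>uu m s - uu m t\<bar> \<le> \<bar>s - t\<bar>"
proof -
  define c where "c = 2 / (pi * real (nn m))"
  have c0: "c > 0" using nn_pos[of m] by (simp add: c_def)
  have "uu m s - uu m t = c * (cos (pi * real (nn m) * (s + 1) / 2) - cos (pi * real (nn m) * (t + 1) / 2))"
    unfolding uu_def c_def by (simp add: right_diff_distrib)
  then have "\<bar>uu m s - uu m t\<bar> = c * \<bar>cos (pi * real (nn m) * (s + 1) / 2) - cos (pi * real (nn m) * (t + 1) / 2)\<bar>"
    using c0 by (simp add: abs_mult)
  also have "\<dots> \<le> c * \<bar>pi * real (nn m) * (s + 1) / 2 - pi * real (nn m) * (t + 1) / 2\<bar>"
    using c0 cos_lip by (intro mult_left_mono) auto
  also have "pi * real (nn m) * (s + 1) / 2 - pi * real (nn m) * (t + 1) / 2 = (pi * real (nn m) / 2) * (s - t)"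
    by (simp add: field_simps)
  also have "c * \<bar>(pi * real (nn m) / 2) * (s - t)\<bar> = \<bar>s - t\<bar>"
    using nn_pos[of m] pi_gt_zero by (simp add: c_def abs_mult)
  finally show ?thesis .
qed

lemma uu_bnd: "\<bar>uu m t\<bar> \<le> 1"
proof -
  have n: "real (nn m) \<ge> 1" using nn_pos[of m] by simp
  have "pi * real (nn m) \<ge> 3 * 1" by (rule mult_mono) (use pi_gt3 n in auto)
  then have "pi * real (nn m) \<ge> 2" by simp
  then have c: "2 / (pi * real (nn m)) \<le> 1" by simp
  have c0: "0 \<le> 2 / (pi * real (nn m))" using n by simp
  have "\<bar>uu m t\<bar> = 2 / (pi * real (nn m)) * \<bar>cos (pi * real (nn m) * (t + 1) / 2)\<bar>"
    using c0 by (simp add: uu_def abs_mult)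
  also have "\<dots> \<le> 1 * 1" using c c0 abs_cos_le_one by (intro mult_mono) auto
  finally show ?thesis by simp
qed

lemma uu_lo: "uu m (lo m) = 0"
proof -
  have h: "real (nn m) * (lo m + 1) = real (qq m) - 2 * real (KK m)"
    using nn_pos[of m] by (simp add: lo_def)
  have "pi * real (nn m) * (lo m + 1) / 2 = pi * (real (nn m) * (lo m + 1)) / 2" by (simp add: mult.assoc)
  also have "\<dots> = pi * (6 * real (KK m) + 1) / 2" unfolding h by (simp add: qq_real)
  also have "\<dots> = real (3 * KK m) * pi + pi / 2" by (simp add: field_simps)
  finally have arg: "pi * real (nn m) * (lo m + 1) / 2 = real (3 * KK m) * pi + pi / 2" .
  show ?thesis unfolding uu_def arg cos_add by (simp only: sin_npi cos_pi_half) simp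
qed

lemma uu_hi: "uu m (hi m) = 0"
proof -
  have h: "real (nn m) * (hi m + 1) = real (qq m) - 2"
    using nn_pos[of m] by (simp add: hi_def)
  have "pi * real (nn m) * (hi m + 1) / 2 = pi * (real (nn m) * (hi m + 1)) / 2" by (simp add: mult.assoc)
  also have "\<dots> = pi * (8 * real (KK m) - 1) / 2" unfolding h by (simp add: qq_real)
  also have "\<dots> = real (4 * KK m - 1) * pi + pi / 2"
  proof -
    have "real (4 * KK m - 1) = 4 * real (KK m) - 1" using KK_pos[of m] by (simp add: of_nat_diff)
    then show ?thesis by (simp add: field_simps)
  qed
  finally have arg: "pi * real (nn m) * (hi m + 1) / 2 = real (4 * KK m - 1) * pi + pi / 2" .
  show ?thesis unfolding uu_def arg cos_add by (simp only: sin_npi cos_pi_half) simp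
qed

lemma uu_node: "uu m (node (nn m) k) = 2 / (pi * real (nn m)) * (-1)^k"
proof -
  have h: "real (nn m) * (node (nn m) k + 1) = 2 * real k"
    using nn_pos[of m] by (simp add: node_def)
  have "pi * real (nn m) * (node (nn m) k + 1) / 2 = pi * (real (nn m) * (node (nn m) k + 1)) / 2" by (simp add: mult.assoc)
  also have "\<dots> = real k * pi" unfolding h by simp
  finally have arg: "pi * real (nn m) * (node (nn m) k + 1) / 2 = real k * pi" .
  show ?thesis unfolding uu_def arg by simp
qed

lemma uu_ends:
  assumes "lo m \<le> t" "t \<le> hi m"
  shows "\<bar>uu m t\<bar> \<le> t - lo m" "\<bar>uu m t\<bar> \<le> hi m - t"
proof -
  show "\<bar>uu m t\<bar> \<le> t - lo m" using uu_lip[of m t "lo m"] assms by (simp add: uu_lo)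
  show "\<bar>uu m t\<bar> \<le> hi m - t" using uu_lip[of m t "hi m"] assms by (simp add: uu_hi)
qed

definition pc :: "(nat \<Rightarrow> bool) \<Rightarrow> real \<Rightarrow> real" where
  "pc P t = (if \<exists>i. P i \<and> lo i \<le> t \<and> t \<le> hi i then uu (SOME i. P i \<and> lo i \<le> t \<and> t \<le> hi i) t else 0)"

lemma pc_in: "P i \<Longrightarrow> lo i \<le> t \<Longrightarrow> t \<le> hi i \<Longrightarrow> pc P t = uu i t"
proof -
  assume a: "P i" "lo i \<le> t" "t \<le> hi i"
  define j where "j = (SOME i. P i \<and> lo i \<le> t \<and> t \<le> hi i)"
  have "P j \<and> lo j \<le> t \<and> t \<le> hi j" unfolding j_def by (rule someI[of _ i]) (use a in auto)
  then have "j = i" using uniq_I a by blast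
  then show ?thesis using a by (auto simp: pc_def j_def[symmetric])
qed

lemma pc_out: "(\<And>i. P i \<Longrightarrow> \<not> (lo i \<le> t \<and> t \<le> hi i)) \<Longrightarrow> pc P t = 0"
  by (auto simp: pc_def)

lemma pc_bnd: "\<bar>pc P t\<bar> \<le> 1"
  by (simp add: pc_def uu_bnd)

lemma pc_lip_le:
  assumes st: "s \<le> t"
  shows "\<bar>pc P s - pc P t\<bar> \<le> \<bar>s - t\<bar>"
proof (cases "\<exists>i. P i \<and> lo i \<le> s \<and> s \<le> hi i")
  case True
  then obtain i where i: "P i" "lo i \<le> s" "s \<le> hi i" by blast
  have ps: "pc P s = uu i s" using pc_in[of P i s] i by blast
  show ?thesis
  proof (cases "\<exists>i'. P i' \<and> lo i' \<le> t \<and> t \<le> hi i'")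
    case True
    then obtain i' where i': "P i'" "lo i' \<le> t" "t \<le> hi i'" by blast
    have pt: "pc P t = uu i' t" using pc_in[of P i' t] i' by blast
    show ?thesis
    proof (cases "i = i'")
      case True then show ?thesis using ps pt uu_lip by simp
    next
      case False
      have "hi i < lo i'"
      proof (cases "i < i'")
        case True
        then have "hi i' < lo i" by (rule order_I)
        then show ?thesis using i i' st by linarith
      next
        case F: False
        then have "i' < i" using False by simp
        then show ?thesis by (rule order_I)
      qed
      then show ?thesis using ps pt uu_ends(2)[OF i(2,3)] uu_ends(1)[OF i'(2,3)] st
        by (smt (verit))
    qed
  next
    case False
    then have pt: "pc P t = 0" by (intro pc_out) auto
    have "hi i < t" using False i st by force
    then show ?thesis using ps pt uu_ends(2)[OF i(2,3)] st by (smt (verit))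
  qed
next
  case False
  then have ps: "pc P s = 0" by (intro pc_out) auto
  show ?thesis
  proof (cases "\<exists>i'. P i' \<and> lo i' \<le> t \<and> t \<le> hi i'")
    case True
    then obtain i' where i': "P i'" "lo i' \<le> t" "t \<le> hi i'" by blast
    have pt: "pc P t = uu i' t" using pc_in[of P i' t] i' by blast
    have "s < lo i'" using False i' st by force
    then show ?thesis using ps pt uu_ends(1)[OF i'(2,3)] st by (smt (verit))
  next
    case False
    then have pt: "pc P t = 0" by (intro pc_out) auto
    then show ?thesis using ps by simp
  qed
qed

lemma pc_lip: "\<bar>pc P s - pc P t\<bar> \<le> \<bar>s - t\<bar>"
proof (cases "s \<le> t")
  case True then show ?thesis by (rule pc_lip_le)
next
  case False
  then have "\<bar>pc P t - pc P s\<bar> \<le> \<bar>t - s\<bar>" by (intro pc_lip_le) simp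
  then show ?thesis by (simp add: abs_minus_commute)
qed



definition f0 :: "real \<Rightarrow> real" where "f0 = pc (\<lambda>_. True)"
definition phi :: "nat \<Rightarrow> real \<Rightarrow> real" where "phi m = pc (\<lambda>i. i = m)"
definition RR :: "nat \<Rightarrow> real \<Rightarrow> real" where "RR m = pc (\<lambda>i. i \<noteq> m)"

lemma f0_split: "f0 t = phi m t + RR m t"
proof (cases "\<exists>i. lo i \<le> t \<and> t \<le> hi i")
  case True
  then obtain i where i: "lo i \<le> t" "t \<le> hi i" by blast
  have a: "f0 t = uu i t" unfolding f0_def using pc_in[of "\<lambda>_. True" i t] i by simp
  show ?thesis
  proof (cases "i = m")
    case True
    have "phi m t = uu i t" unfolding phi_def using pc_in[of "\<lambda>i. i = m" i t] i True by simp
    moreover have "RR m t = 0" unfolding RR_def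
    proof (rule pc_out)
      fix j assume "j \<noteq> m"
      then show "\<not> (lo j \<le> t \<and> t \<le> hi j)" using uniq_I[of j t i] i True by blast
    qed
    ultimately show ?thesis using a by simp
  next
    case False
    have "RR m t = uu i t" unfolding RR_def using pc_in[of "\<lambda>i. i \<noteq> m" i t] i False by simp
    moreover have "phi m t = 0" unfolding phi_def
    proof (rule pc_out)
      fix j assume "j = m"
      then show "\<not> (lo j \<le> t \<and> t \<le> hi j)" using uniq_I[of j t i] i False by blast
    qed
    ultimately show ?thesis using a by simp
  qed
next
  case False
  then show ?thesis unfolding f0_def phi_def RR_def by (simp add: pc_out)
qed

lemma RR_van: assumes "\<bar>t - xx m\<bar> < 1 / 2^(m+2)" shows "RR m t = 0"
  unfolding RR_def
proof (rule pc_out)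
  fix i assume i: "i \<noteq> m"
  show "\<not> (lo i \<le> t \<and> t \<le> hi i)"
  proof
    assume a: "lo i \<le> t \<and> t \<le> hi i"
    then have "1/2^(m+2) \<le> \<bar>t - xx m\<bar>" using far_I[OF i] by blast
    then show False using assms by linarith
  qed
qed

lemma f0_xx: "f0 (xx m) = 0"
  unfolding f0_def
proof (rule pc_out)
  fix i assume "True"
  show "\<not> (lo i \<le> xx m \<and> xx m \<le> hi i)"
  proof
    assume a: "lo i \<le> xx m \<and> xx m \<le> hi i"
    show False
    proof (cases "i = m")
      case True then show False using a hi_lt_xx[of m] by simp
    next
      case False
      have p: "(0::real) < 1 / 2^(m+2)" by simp
      have "1 / 2^(m+2) \<le> \<bar>xx m - xx m\<bar>" using far_I[OF False, of "xx m"] a by blast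
      then have "1 / 2^(m+2) \<le> (0::real)" by (simp only: diff_self abs_zero)
      then show False using p by linarith
    qed
  qed
qed

lemma xx_node: "xx m - node (nn m) k = (8 * real (KK m) + 1 - 2 * real k) / real (nn m)"
proof -
  have "xx m - node (nn m) k = real (qq m) / real (nn m) - 2 * real k / real (nn m)"
    by (simp add: xx_def node_def)
  also have "\<dots> = (real (qq m) - 2 * real k) / real (nn m)" by (rule diff_divide_distrib[symmetric])
  finally show ?thesis by (simp add: qq_real)
qed

lemma phi_node:
  "phi m (node (nn m) k) = (if 3 * KK m + 1 \<le> k \<and> k \<le> 4 * KK m - 1 then 2 / (pi * real (nn m)) * (-1)^k else 0)"
proof -
  define n where "n = nn m"
  define K where "K = KK m"
  have n0: "real n > 0" using nn_pos[of m] by (simp add: n_def)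
  have K1: "K \<ge> 1" using KK_pos[of m] by (simp add: K_def)
  have l: "lo m \<le> node n k \<longleftrightarrow> 3 * K + 1 \<le> k"
  proof -
    have "lo m \<le> node n k \<longleftrightarrow> (8 * real K + 1 - 2 * real K) / real n \<le> 2 * real k / real n"
      by (simp add: lo_def node_def qq_real n_def K_def)
    also have "\<dots> \<longleftrightarrow> 6 * real K + 1 \<le> 2 * real k" using n0 by (simp add: divide_le_cancel)
    also have "\<dots> \<longleftrightarrow> 3 * K + 1 \<le> k" by linarith
    finally show ?thesis .
  qed
  have h: "node n k \<le> hi m \<longleftrightarrow> k \<le> 4 * K - 1"
  proof -
    have "node n k \<le> hi m \<longleftrightarrow> 2 * real k / real n \<le> (8 * real K + 1 - 2) / real n"
      by (simp add: hi_def node_def qq_real n_def K_def)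
    also have "\<dots> \<longleftrightarrow> 2 * real k \<le> 8 * real K - 1" using n0 by (simp add: divide_le_cancel)
    also have "\<dots> \<longleftrightarrow> k \<le> 4 * K - 1" using K1 by linarith
    finally show ?thesis .
  qed
  show ?thesis
  proof (cases "3 * KK m + 1 \<le> k \<and> k \<le> 4 * KK m - 1")
    case True
    then have "lo m \<le> node n k" "node n k \<le> hi m" using l h by (simp_all add: K_def)
    then have "phi m (node n k) = uu m (node n k)" unfolding phi_def using pc_in[of "\<lambda>i. i = m" m] by simp
    then show ?thesis using True by (simp add: uu_node n_def)
  next
    case False
    then have "\<not> (lo m \<le> node n k \<and> node n k \<le> hi m)" using l h by (simp add: K_def)
    then have "phi m (node n k) = 0" unfolding phi_def by (intro pc_out) auto
    then show ?thesis using False by (subst if_not_P) (simp_all add: n_def)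
  qed
qed



lemma Nphi:
  "(\<Sum>k=0..nn m. (-1)^k * phi m (node (nn m) k) / (xx m - node (nn m) k))
     = (2/pi) * (\<Sum>i=1..KK m - 1. 1 / (2 * real i + 1))"
proof -
  define n where "n = nn m"
  define K where "K = KK m"
  have n0: "real n > 0" using nn_pos[of m] by (simp add: n_def)
  have K1: "K \<ge> 1" using KK_pos[of m] by (simp add: K_def)
  have Kn: "4 * K - 1 \<le> n"
  proof -
    have "8 * K + 1 \<le> qq m" by (simp add: qq_def K_def)
    moreover have "qq m \<le> n" by (simp add: n_def nn_def)
    ultimately show ?thesis by linarith
  qed
  define P where "P k \<longleftrightarrow> 3 * K + 1 \<le> k \<and> k \<le> 4 * K - 1" for k
  have t: "(-1)^k * phi m (node n k) / (xx m - node n k)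
           = (if P k then (2/pi) / (8 * real K + 1 - 2 * real k) else 0)" for k
  proof (cases "P k")
    case True
    have ph: "phi m (node n k) = 2 / (pi * real n) * (-1)^k"
      using phi_node[of m k] True by (simp add: P_def n_def K_def)
    have xn: "xx m - node n k = (8 * real K + 1 - 2 * real k) / real n"
      using xx_node[of m k] by (simp add: n_def K_def)
    have sq: "(-1::real)^k * (-1)^k = 1" by (simp flip: power_add add: mult_2[symmetric])
    have "(-1)^k * phi m (node n k) / (xx m - node n k)
        = ((-1)^k * (-1)^k) * (2 / (pi * real n)) / ((8 * real K + 1 - 2 * real k) / real n)"
      unfolding ph xn by (simp add: algebra_simps)
    also have "\<dots> = (2/pi) / (8 * real K + 1 - 2 * real k)"
      unfolding sq using n0 by (simp add: field_simps)
    finally show ?thesis using True by simp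
  next
    case False
    have c: "\<not> (3 * KK m + 1 \<le> k \<and> k \<le> 4 * KK m - 1)" using False by (simp add: P_def K_def)
    have ph: "phi m (node n k) = 0"
      unfolding n_def phi_node if_not_P[OF c] by simp
    then show ?thesis using False by simp
  qed
  have "(\<Sum>k=0..n. (-1)^k * phi m (node n k) / (xx m - node n k))
      = (\<Sum>k=0..n. (if P k then (2/pi) / (8 * real K + 1 - 2 * real k) else 0))"
    using t by simp
  also have "\<dots> = (\<Sum>k\<in>{k\<in>{0..n}. P k}. (2/pi) / (8 * real K + 1 - 2 * real k))"
    by (rule sum.inter_filter[symmetric]) simp
  also have "{k\<in>{0..n}. P k} = {3 * K + 1 .. 4 * K - 1}" using Kn by (auto simp: P_def)
  also have "(\<Sum>k\<in>{3 * K + 1 .. 4 * K - 1}. (2/pi) / (8 * real K + 1 - 2 * real k))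
      = (\<Sum>i\<in>{1..K-1}. (2/pi) / (8 * real K + 1 - 2 * real (4 * K - i)))"
    by (rule sum.reindex_bij_witness[where i="\<lambda>k. 4 * K - k" and j="\<lambda>i. 4 * K - i"]) auto
  also have "\<dots> = (\<Sum>i\<in>{1..K-1}. (2/pi) * (1 / (2 * real i + 1)))"
  proof (rule sum.cong[OF refl])
    fix i assume "i \<in> {1..K-1}"
    then have "i \<le> 4 * K" by auto
    then have "real (4 * K - i) = 4 * real K - real i" by (simp add: of_nat_diff)
    then show "(2/pi) / (8 * real K + 1 - 2 * real (4 * K - i)) = (2/pi) * (1 / (2 * real i + 1))"
      by simp
  qed
  also have "\<dots> = (2/pi) * (\<Sum>i=1..K-1. 1 / (2 * real i + 1))" by (rule sum_distrib_left[symmetric])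
  finally show ?thesis by (simp add: n_def K_def)
qed

lemma harm_lower:
  assumes "K \<ge> 1"
  shows "(\<Sum>i=1..K-1. 1 / (2 * real i + 1)) \<ge> ln (real K) / 3"
proof -
  have "ln (real K) = ln (real (K - 1) + 1)" using assms by (simp add: of_nat_diff)
  also have "\<dots> \<le> harm (K - 1)" by (rule ln_le_harm)
  also have "harm (K - 1) = (\<Sum>i=1..K-1. inverse (real i))" by (simp add: harm_def)
  finally have a: "ln (real K) \<le> (\<Sum>i=1..K-1. inverse (real i))" .
  have "(\<Sum>i=1..K-1. inverse (real i)) / 3 = (\<Sum>i=1..K-1. inverse (real i) / 3)"
    by (rule sum_divide_distrib)
  also have "\<dots> \<le> (\<Sum>i=1..K-1. 1 / (2 * real i + 1))"
  proof (rule sum_mono)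
    fix i assume "i \<in> {1..K-1}"
    then have i: "real i \<ge> 1" by simp
    then show "inverse (real i) / 3 \<le> 1 / (2 * real i + 1)"
      by (simp add: field_simps)
  qed
  finally show ?thesis using a by (smt (verit) divide_right_mono)
qed



lemma four_pow: "(4::real)^k = (2^k)^2"
  by (simp add: power2_eq_square power_mult_distrib[symmetric])

lemma m_le: "m + 5 \<le> 4^(m+2)"
proof -
  have "m < 2^m" by (rule less_exp)
  also have "(2::nat)^m \<le> 4^m" by (rule power_mono) auto
  finally show ?thesis by simp
qed

lemma nle: "nn m \<le> 2^(m + EE m + 5)"
proof -
  have "qq m \<le> 16 * 2^(EE m)" unfolding qq_def KK_def by simp
  then have "nn m \<le> 2^(m+1) * (16 * 2^(EE m))" unfolding nn_def by (rule mult_left_mono) simp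
  also have "(2::nat)^(m+1) * (16 * 2^(EE m)) = 2^(m + EE m + 5)"
  proof -
    have "(2::nat)^(m + EE m + 5) = 2^(m+1) * 2^4 * 2^(EE m)" by (simp only: power_add[symmetric]) (simp add: algebra_simps)
    then show ?thesis by simp
  qed
  finally show ?thesis .
qed

lemma nn_ge2: "real (nn m) \<ge> 2"
proof -
  have "2^(m+1) \<le> nn m" unfolding nn_def qq_def by simp
  moreover have "(2::nat) \<le> 2^(m+1)" by (rule self_le_power) simp_all
  ultimately show ?thesis by linarith
qed

lemma ln_nn_le: "ln (real (nn m)) \<le> 2 * real (EE m)"
proof -
  have "real (nn m) \<le> real ((2::nat)^(m + EE m + 5))" using nle[of m] by (simp only: of_nat_le_iff)
  also have "real ((2::nat)^(m + EE m + 5)) = (2::real)^(m + EE m + 5)" by simp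
  finally have a: "real (nn m) \<le> (2::real)^(m + EE m + 5)" .
  have "ln (real (nn m)) \<le> ln ((2::real)^(m + EE m + 5))"
    using a nn_ge2[of m] by (subst ln_le_cancel_iff) auto
  also have "\<dots> = real (m + EE m + 5) * ln 2" by (rule ln_realpow)
  also have "\<dots> \<le> real (m + EE m + 5) * 1" using ln_2_less_1 by (intro mult_left_mono) auto
  also have "\<dots> \<le> 2 * real (EE m)"
  proof -
    have "m + 5 \<le> EE m" using m_le[of m] unfolding EE_def by linarith
    then show ?thesis by simp
  qed
  finally show ?thesis .
qed
lemma main_bound:
  "real (nn m) / ln (real (nn m)) * sup_norm (\<lambda>x. berrut (nn m) f0 x - f0 x) \<ge> 1/50"
proof -
  define n where "n = nn m"
  define K where "K = KK m"
  define x where "x = xx m"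
  define T :: real where "T = (2^(m+2))^2"
  have T0: "T \<ge> 1"
  proof -
    have "(1::real) \<le> 2^(m+2)" by (rule one_le_power) simp
    then show ?thesis unfolding T_def by (rule one_le_power)
  qed
  have n0: "n > 0" using nn_pos[of m] by (simp add: n_def)
  have K1: "K \<ge> 1" using KK_pos[of m] by (simp add: K_def)
  have EE_T: "real (EE m) = 200 * T" unfolding EE_def T_def by (simp add: four_pow)
  have xr: "x = -1 + (2 * real (4 * K) + 1) / real n"
    by (simp add: x_def xx_def n_def K_def qq_real)
  have rn: "4 * K < n"
  proof -
    have "8 * K + 1 \<le> qq m" by (simp add: qq_def K_def)
    moreover have "qq m \<le> n" by (simp add: n_def nn_def)
    ultimately show ?thesis by linarith
  qed
  note md = mid_den[OF n0 rn xr]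
  define Nphi where "Nphi = (\<Sum>k=0..n. (-1)^k * phi m (node n k) / (x - node n k))"
  define NR where "NR = (\<Sum>k=0..n. (-1)^k * RR m (node n k) / (x - node n k))"
  have Nsplit: "berrut_num n f0 x = Nphi + NR"
    unfolding berrut_num_def Nphi_def NR_def
    by (subst sum.distrib[symmetric]) (simp add: f0_split[of _ m] distrib_left add_divide_distrib)
  have NRb: "\<bar>NR\<bar> \<le> 5 * T"
  proof -
    have o: "(1::real) \<le> 2^(m+2)" by (rule one_le_power) simp
    have d: "(0::real) < 1 / 2^(m+2)" "(1::real) / 2^(m+2) \<le> 1" using o by simp_all
    have "\<bar>NR\<bar> \<le> 5 / (1 / 2^(m+2))^2"
      unfolding NR_def
      by (rule junk_bound[OF n0 pc_lip[of "\<lambda>i. i \<noteq> m", folded RR_def] pc_bnd[of "\<lambda>i. i \<noteq> m", folded RR_def] _ d])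
         (simp add: RR_van x_def)
    also have "\<dots> = 5 * T" by (simp add: T_def power_one_over)
    finally show ?thesis .
  qed
  have lnK: "ln (real K) = real (EE m) * ln 2"
  proof -
    have "real K = (2::real)^(EE m)" unfolding K_def KK_def by simp
    then show ?thesis by (simp only: ln_realpow)
  qed
  have Nphib: "Nphi \<ge> 200 * T / 9"
  proof -
    define S where "S = (\<Sum>i=1..K-1. 1 / (2 * real i + 1))"
    have A: "Nphi = (2/pi) * S"
      unfolding Nphi_def n_def x_def K_def S_def by (rule Nphi)
    have B: "S \<ge> ln (real K) / 3" unfolding S_def by (rule harm_lower[OF K1])
    have "ln (real K) = 200 * T * ln 2" unfolding lnK EE_T by simp
    moreover have "200 * T * (2/3) \<le> 200 * T * ln 2"
      using ln2_ge_two_thirds T0 by (intro mult_left_mono) auto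
    ultimately have C: "ln (real K) / 3 \<ge> 400 * T / 9" by simp
    have S0: "S \<ge> 400 * T / 9" using B C by linarith
    have "2/pi \<ge> 2/(4::real)" using pi_less_4 pi_gt_zero by (intro divide_left_mono) auto
    then have "(2/4) * S \<le> (2/pi) * S" using S0 T0 by (intro mult_right_mono) auto
    then show ?thesis using A S0 by linarith
  qed
  have Nb: "berrut_num n f0 x \<ge> 17 * T" using Nsplit NRb Nphib T0 by linarith
  have fx: "f0 x = 0" unfolding x_def by (rule f0_xx)
  have err: "berrut n f0 x - f0 x = berrut_num n f0 x / berrut_den n x"
    using md(3) fx by (auto simp: berrut_def)
  have errb: "\<bar>berrut n f0 x - f0 x\<bar> \<ge> 17 * T / (2 * real n)"
  proof -
    have "\<bar>berrut n f0 x - f0 x\<bar> = \<bar>berrut_num n f0 x\<bar> / \<bar>berrut_den n x\<bar>"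
      unfolding err by (rule abs_divide)
    also have "\<dots> \<ge> 17 * T / (2 * real n)"
      using Nb md(1,2) T0 n0 by (intro frac_le) auto
    finally show ?thesis .
  qed
  have bdd: "bdd_above ((\<lambda>t. \<bar>berrut n f0 t - f0 t\<bar>) ` {-1..1})"
  proof (rule bdd_aboveI2)
    fix t :: real assume t: "t \<in> {-1..1}"
    have "\<bar>berrut n f0 t\<bar> \<le> 2 * (real n + 1) * 1"
      by (rule berrut_bound[OF n0 _ t]) (simp add: f0_def pc_bnd)
    moreover have "\<bar>f0 t\<bar> \<le> 1" by (simp add: f0_def pc_bnd)
    ultimately show "\<bar>berrut n f0 t - f0 t\<bar> \<le> 2 * (real n + 1) + 1" by linarith
  qed
  have xin: "x \<in> {-1..1}"
  proof -
    have "x = -1 + 1/2^(m+1)" by (simp add: x_def xx_eq)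
    moreover have "(1::real)/2^(m+1) \<le> 1"
    proof -
      have o: "(1::real) \<le> 2^(m+1)" by (rule one_le_power) simp
      then show ?thesis by simp
    qed
    moreover have "(0::real) \<le> 1/2^(m+1)" by simp
    ultimately show ?thesis unfolding atLeastAtMost_iff by linarith
  qed
  have S: "sup_norm (\<lambda>x. berrut n f0 x - f0 x) \<ge> 17 * T / (2 * real n)"
  proof -
    have "\<bar>berrut n f0 x - f0 x\<bar> \<le> sup_norm (\<lambda>x. berrut n f0 x - f0 x)"
      unfolding sup_norm_def by (rule cSUP_upper[OF xin bdd])
    then show ?thesis using errb by linarith
  qed
  have n2: "real n \<ge> 2" using nn_ge2[of m] by (simp add: n_def)
  have lnpos: "ln (real n) > 0" using n2 by simp
  have lnle: "ln (real n) \<le> 400 * T" using ln_nn_le[of m] EE_T by (simp add: n_def)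
  have "real n / ln (real n) * sup_norm (\<lambda>x. berrut n f0 x - f0 x)
        \<ge> real n / ln (real n) * (17 * T / (2 * real n))"
    using S n0 lnpos by (intro mult_left_mono) auto
  moreover have "real n / ln (real n) * (17 * T / (2 * real n)) = 17 * T / (2 * ln (real n))"
    using n0 lnpos by (simp add: field_simps)
  moreover have "17 * T / (2 * ln (real n)) \<ge> 17 * T / (2 * (400 * T))"
    using lnle lnpos T0 by (intro divide_left_mono) auto
  moreover have "17 * T / (2 * (400 * T)) = 17 / 800" using T0 by simp
  ultimately show ?thesis unfolding n_def by simp
qed



lemma nn_mono: "strict_mono nn"
proof (rule strict_monoI_Suc)
  fix m
  have "EE m \<le> EE (Suc m)" unfolding EE_def by (simp add: power_increasing)
  then have "KK m \<le> KK (Suc m)" unfolding KK_def by (simp add: power_increasing)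
  then have q: "qq m \<le> qq (Suc m)" unfolding qq_def by simp
  have q0: "qq m > 0" unfolding qq_def by simp
  have "nn m = 2^(m+1) * qq m" by (simp add: nn_def)
  also have "\<dots> < 2^(Suc m + 1) * qq m" using q0 by simp
  also have "\<dots> \<le> 2^(Suc m + 1) * qq (Suc m)" using q by simp
  also have "\<dots> = nn (Suc m)" by (simp add: nn_def)
  finally show "nn m < nn (Suc m)" .
qed

theorem mainTheorem1:
  shows "\<exists>f :: real \<Rightarrow> real. (\<exists>\<kappa>. \<forall>x\<in>{-1..1}. \<forall>y\<in>{-1..1}. \<bar>f x - f y\<bar> \<le> \<kappa> * \<bar>x - y\<bar>) \<and>
     limsup (\<lambda>n. ereal (real n / ln (real n) * sup_norm (\<lambda>x. berrut n f x - f x))) > 0"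
proof (intro exI conjI)
  show "\<forall>x\<in>{-1..1}. \<forall>y\<in>{-1..1}. \<bar>f0 x - f0 y\<bar> \<le> 1 * \<bar>x - y\<bar>"
    unfolding f0_def using pc_lip by simp
  define X where "X n = ereal (real n / ln (real n) * sup_norm (\<lambda>x. berrut n f0 x - f0 x))" for n
  have "ereal (1/50) \<le> limsup (X \<circ> nn)"
  proof (rule le_Limsup)
    show "sequentially \<noteq> bot" by simp
    show "\<forall>\<^sub>F m in sequentially. ereal (1/50) \<le> (X \<circ> nn) m"
      by (rule always_eventually) (simp only: X_def comp_def ereal_less_eq main_bound, simp)
  qed
  also have "\<dots> \<le> limsup X" by (rule limsup_subseq_mono[OF nn_mono])
  finally have "ereal (1/50) \<le> limsup X" .
  then show "limsup (\<lambda>n. ereal (real n / ln (real n) * sup_norm (\<lambda>x. berrut n f0 x - f0 x))) > 0"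
    unfolding X_def[symmetric] by (rule less_le_trans[rotated]) simp
qed


end
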